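(* Let $Z=(Z_j)_{j\in N}$ be independent random variables indexed by a finite or countable set $N$. Then for all $X,Y\in B(Z)$, the Shapley influence distributions satisfy \[ \mathrm{TV}(\mu_X,\mu_Y)\le\sqrt{\mathbb E\big[(X-Y)^2\big]}. \]
   Context: The $Z_j$ take values in standard Borel spaces and are defined on a common probability space; for $S\subseteq N$ write $Z_S=(Z_i)_{i\in S}$. $B(Z)$ is the set of real random variables $X$ measurable with respect to $\sigma(Z)$ with $\mathbb E[X]=0$ and $\mathbb E[X^2]=1$. For $X\in B(Z)$ define the cooperative game $v_X(S)=\mathrm{Var}(\mathbb E[X\mid Z_S])$ for finite nonempty $S\subseteq N$ (with $v_X(\emptyset)=0$). Its Harsanyi dividends $d_X(T)$, for finite nonempty $T\subseteq N$, are the unique numbers with $v_X(S)=\sum_{\emptyset\ne T\subseteq S}d_X(T)$ for every finite $S$, and the Shapley value of player $k$ is $\mu_X(k)=\sum_{S\ni k,\ S\text{ finite}}\frac{d_X(S)}{|S|}$. The resulting $\mu_X$ is a probability measure on $N$, called the Shapley influence distribution of $X$. Total variation distance: $\mathrm{TV}(\mu,\nu)=\frac12\sum_{i\in N}|\mu(i)-\nu(i)|$. *)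

theory Defs
  imports "HOL-Probability.Probability"
begin

text \<open>Standard Borel space: measurably isomorphic to a Borel subset of the real line
  (Kuratowski's characterisation of standard Borel spaces).\<close>
definition standard_borel :: "'v measure \<Rightarrow> bool" where
  "standard_borel S \<longleftrightarrow>
     (\<exists>A \<in> sets (borel :: real measure). \<exists>f g.
        f \<in> S \<rightarrow>\<^sub>M restrict_space borel A \<and> g \<in> restrict_space borel A \<rightarrow>\<^sub>M S \<and>
        (\<forall>x \<in> space S. g (f x) = x) \<and> (\<forall>y \<in> A. f (g y) = y))"

definition sigmaZ :: "'a measure \<Rightarrow> ('i \<Rightarrow> 'v measure) \<Rightarrow> ('i \<Rightarrow> 'a \<Rightarrow> 'v) \<Rightarrow> 'i set \<Rightarrow> 'a measure" where
  "sigmaZ M Sp Z S = sigma (space M) (\<Union>j\<in>S. {Z j -` A \<inter> space M | A. A \<in> sets (Sp j)})"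

definition BZ :: "'a measure \<Rightarrow> ('i \<Rightarrow> 'v measure) \<Rightarrow> ('i \<Rightarrow> 'a \<Rightarrow> 'v) \<Rightarrow> 'i set \<Rightarrow> ('a \<Rightarrow> real) set" where
  "BZ M Sp Z N = {X. X \<in> borel_measurable (sigmaZ M Sp Z N) \<and>
                     integrable M (\<lambda>\<omega>. (X \<omega>)\<^sup>2) \<and>
                     (\<integral>\<omega>. X \<omega> \<partial>M) = 0 \<and> (\<integral>\<omega>. (X \<omega>)\<^sup>2 \<partial>M) = 1}"

definition var :: "'a measure \<Rightarrow> ('a \<Rightarrow> real) \<Rightarrow> real" where
  "var M f = (\<integral>\<omega>. (f \<omega> - (\<integral>\<omega>'. f \<omega>' \<partial>M))\<^sup>2 \<partial>M)"

definition vgame :: "'a measure \<Rightarrow> ('i \<Rightarrow> 'v measure) \<Rightarrow> ('i \<Rightarrow> 'a \<Rightarrow> 'v) \<Rightarrow> ('a \<Rightarrow> real) \<Rightarrow> 'i set \<Rightarrow> real" where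
  "vgame M Sp Z X S = (if S = {} then 0 else var M (real_cond_exp M (sigmaZ M Sp Z S) X))"

definition harsanyi :: "'i set \<Rightarrow> ('i set \<Rightarrow> real) \<Rightarrow> 'i set \<Rightarrow> real" where
  "harsanyi N v = (THE d. (\<forall>S. finite S \<and> S \<subseteq> N \<longrightarrow> v S = (\<Sum>T\<in>{T. T \<subseteq> S \<and> T \<noteq> {}}. d T)) \<and>
                          (\<forall>T. \<not> (finite T \<and> T \<noteq> {} \<and> T \<subseteq> N) \<longrightarrow> d T = 0))"

definition shapley :: "'i set \<Rightarrow> ('i set \<Rightarrow> real) \<Rightarrow> 'i \<Rightarrow> real" where
  "shapley N v k = (\<Sum>\<^sub>\<infinity>S\<in>{S. finite S \<and> k \<in> S \<and> S \<subseteq> N}. harsanyi N v S / real (card S))"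

definition shapley_infl :: "'a measure \<Rightarrow> ('i \<Rightarrow> 'v measure) \<Rightarrow> ('i \<Rightarrow> 'a \<Rightarrow> 'v) \<Rightarrow> 'i set \<Rightarrow> ('a \<Rightarrow> real) \<Rightarrow> 'i \<Rightarrow> real" where
  "shapley_infl M Sp Z N X = shapley N (vgame M Sp Z X)"

definition TV :: "'i set \<Rightarrow> ('i \<Rightarrow> real) \<Rightarrow> ('i \<Rightarrow> real) \<Rightarrow> real" where
  "TV N \<mu> \<nu> = (1/2) * (\<Sum>\<^sub>\<infinity>i\<in>N. \<bar>\<mu> i - \<nu> i\<bar>)"

end

theory Submission
  imports Defs
begin


definition mob :: "('i set \<Rightarrow> real) \<Rightarrow> 'i set \<Rightarrow> real" where
  "mob v T = (\<Sum>S\<in>Pow T. (-1) ^ card (T - S) * v S)"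

lemma sum_Pow_insert:
  assumes "finite T" "a \<notin> T"
  shows "(\<Sum>S\<in>Pow (insert a T). h S) = (\<Sum>S\<in>Pow T. h S) + (\<Sum>S\<in>Pow T. h (insert a S))"
proof -
  have inj: "inj_on (insert a) (Pow T)" using assms(2) by (auto simp: inj_on_def) 
  have "(\<Sum>S\<in>Pow (insert a T). h S) = (\<Sum>S\<in>Pow T \<union> insert a ` Pow T. h S)"
    by (simp add: Pow_insert)
  also have "\<dots> = (\<Sum>S\<in>Pow T. h S) + (\<Sum>S\<in>insert a ` Pow T. h S)"
    using assms by (intro sum.union_disjoint) auto
  also have "(\<Sum>S\<in>insert a ` Pow T. h S) = (\<Sum>S\<in>Pow T. h (insert a S))"
    using inj by (simp add: sum.reindex)
  finally show ?thesis .
qed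

lemma mob_insert:
  assumes "finite T" "a \<notin> T"
  shows "mob v (insert a T) = mob (\<lambda>S. v (insert a S) - v S) T"
proof -
  have c1: "card (insert a T - S) = Suc (card (T - S))" if "S \<in> Pow T" for S
  proof -
    have "insert a T - S = insert a (T - S)" using that assms by auto
    then show ?thesis using assms by simp
  qed
  have c2: "insert a T - insert a S = T - S" if "S \<in> Pow T" for S
    using that assms by auto
  show ?thesis
    unfolding mob_def using assms
    by (simp add: sum_Pow_insert c1 c2 right_diff_distrib sum_subtractf sum_negf)
qed

lemma mob_sum:
  assumes "finite S"
  shows "(\<Sum>T\<in>Pow S. mob v T) = v S"
  using assms
proof (induction S arbitrary: v rule: finite_induct)
  case empty
  then show ?case by (simp add: mob_def)
next
  case (insert a S)
  have "(\<Sum>T\<in>Pow (insert a S). mob v T) = (\<Sum>T\<in>Pow S. mob v T) + (\<Sum>T\<in>Pow S. mob v (insert a T))"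
    by (rule sum_Pow_insert[OF insert(1,2)])
  also have "(\<Sum>T\<in>Pow S. mob v (insert a T)) = (\<Sum>T\<in>Pow S. mob (\<lambda>U. v (insert a U) - v U) T)"
    using insert by (intro sum.cong refl mob_insert) (auto intro: finite_subset)
  finally show ?case using insert.IH by simp
qed

lemma mob_double:
  assumes "finite T"
  shows "(\<Sum>S\<in>Pow T. \<Sum>R\<in>Pow T. (-1) ^ card (T - S) * (-1) ^ card (T - R) * f (S \<inter> R)) = mob f T"
  using assms
proof (induction T arbitrary: f rule: finite_induct)
  case empty
  then show ?case by (simp add: mob_def)
next
  case (insert a T)
  have c1: "card (insert a T - S) = Suc (card (T - S))" if "S \<in> Pow T" for S
  proof -
    have "insert a T - S = insert a (T - S)" using that insert by auto
    then show ?thesis using insert by simp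
  qed
  have c2: "insert a T - insert a S = T - S" if "S \<in> Pow T" for S
    using that insert by auto
  have i1: "insert a S \<inter> insert a R = insert a (S \<inter> R)" for S R by auto
  have i2: "insert a S \<inter> R = S \<inter> R" "S \<inter> insert a R = S \<inter> R" if "S \<in> Pow T" "R \<in> Pow T" for S R
    using that insert by auto
  let ?g = "\<lambda>U. f (insert a U) - f U"
  have "(\<Sum>S\<in>Pow (insert a T). \<Sum>R\<in>Pow (insert a T). (-1) ^ card (insert a T - S) * (-1) ^ card (insert a T - R) * f (S \<inter> R))
      = (\<Sum>S\<in>Pow T. \<Sum>R\<in>Pow T. (-1) ^ card (T - S) * (-1) ^ card (T - R) * ?g (S \<inter> R))"
    using insert(1,2)
    by (simp add: sum_Pow_insert c1 c2 i1 i2 sum.distrib right_diff_distrib sum_subtractf sum_negf algebra_simps)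
  also have "\<dots> = mob ?g T" by (rule insert.IH)
  also have "\<dots> = mob f (insert a T)" using insert(1,2) by (simp add: mob_insert)
  finally show ?case .
qed

lemma harsanyi_eq:
  assumes v0: "v {} = 0"
  shows "harsanyi N v = (\<lambda>T. if finite T \<and> T \<noteq> {} \<and> T \<subseteq> N then mob v T else 0)"
    (is "_ = ?d0")
  unfolding harsanyi_def
proof (rule the_equality)
  let ?P = "\<lambda>d. (\<forall>S. finite S \<and> S \<subseteq> N \<longrightarrow> v S = (\<Sum>T\<in>{T. T \<subseteq> S \<and> T \<noteq> {}}. d T)) \<and>
                  (\<forall>T. \<not> (finite T \<and> T \<noteq> {} \<and> T \<subseteq> N) \<longrightarrow> d T = 0)"
  have setEq: "{T. T \<subseteq> S \<and> T \<noteq> {}} = Pow S - {{}}" for S :: "'a set" by auto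
  show "?P ?d0"
  proof (intro conjI allI impI)
    fix S :: "'a set" assume S: "finite S \<and> S \<subseteq> N"
    have "(\<Sum>T\<in>{T. T \<subseteq> S \<and> T \<noteq> {}}. ?d0 T) = (\<Sum>T\<in>Pow S - {{}}. mob v T)"
      unfolding setEq using S by (intro sum.cong refl) (auto intro: finite_subset)
    also have "\<dots> = (\<Sum>T\<in>Pow S. mob v T) - mob v {}"
      using S by (simp add: sum_diff1)
    also have "\<dots> = v S" using S v0 mob_sum[of S v] by (simp add: mob_def)
    finally show "v S = (\<Sum>T\<in>{T. T \<subseteq> S \<and> T \<noteq> {}}. ?d0 T)" by simp
  next
    fix T :: "'a set" assume "\<not> (finite T \<and> T \<noteq> {} \<and> T \<subseteq> N)"
    then show "?d0 T = 0" by auto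
  qed
  fix d assume Pd: "?P d"
  have main: "finite T \<Longrightarrow> d T = ?d0 T" for T
  proof (induction T rule: finite_psubset_induct)
    case (psubset T)
    show ?case
    proof (cases "T \<noteq> {} \<and> T \<subseteq> N")
      case False
      then show ?thesis using Pd psubset by auto
    next
      case True
      have fin: "finite (Pow T - {{}})" using psubset by simp
      have e1: "v T = (\<Sum>U\<in>Pow T - {{}}. d U)" using Pd psubset True unfolding setEq by auto
      have e2: "v T = (\<Sum>U\<in>Pow T - {{}}. ?d0 U)" using \<open>?P ?d0\<close> psubset True unfolding setEq by blast
      have TT: "T \<in> Pow T - {{}}" using True by auto
      have s1: "(\<Sum>U\<in>Pow T - {{}}. d U) = d T + (\<Sum>U\<in>Pow T - {{}} - {T}. d U)"
        by (rule sum.remove[OF fin TT])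
      have s2: "(\<Sum>U\<in>Pow T - {{}}. ?d0 U) = ?d0 T + (\<Sum>U\<in>Pow T - {{}} - {T}. ?d0 U)"
        by (rule sum.remove[OF fin TT])
      have s3: "(\<Sum>U\<in>Pow T - {{}} - {T}. d U) = (\<Sum>U\<in>Pow T - {{}} - {T}. ?d0 U)"
        by (intro sum.cong refl psubset.IH) auto
      show ?thesis using e1 e2 s1 s2 s3 by linarith
    qed
  qed
  show "d = ?d0"
  proof
    fix T show "d T = ?d0 T"
      using main Pd by (cases "finite T") auto
  qed
qed




lemma div_card_le: "0 \<le> (x::real) \<Longrightarrow> x / real n \<le> x"
proof (cases "n = 0")
  case False
  assume x: "0 \<le> x"
  have "x / real n \<le> x / 1" using False x by (intro divide_left_mono) auto
  then show ?thesis by simp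
qed simp

lemma infsum_diff':
  fixes f g :: "'a \<Rightarrow> real"
  assumes "f summable_on A" "g summable_on A"
  shows "infsum (\<lambda>x. f x - g x) A = infsum f A - infsum g A"
proof -
  have s: "(\<lambda>x. - g x) summable_on A" using assms(2) by (simp only: summable_on_uminus)
  have "infsum (\<lambda>x. f x + - g x) A = infsum f A + infsum (\<lambda>x. - g x) A"
    by (rule infsum_add[OF assms(1) s])
  then show ?thesis by (simp only: infsum_uminus diff_conv_add_uminus)
qed

lemma fam_bound:
  fixes e :: "'i set \<Rightarrow> real"
  assumes nn: "\<And>T. e T \<ge> 0"
    and bd: "\<And>S. finite S \<Longrightarrow> S \<subseteq> N \<Longrightarrow> sum e (Pow S) \<le> B"
    and G: "finite G" "G \<subseteq> {T. finite T \<and> T \<subseteq> N}"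
  shows "sum e G \<le> B"
proof -
  have "finite (\<Union>G)" using G by auto
  moreover have "\<Union>G \<subseteq> N" using G by auto
  moreover have "sum e G \<le> sum e (Pow (\<Union>G))"
    using \<open>finite (\<Union>G)\<close> nn by (intro sum_mono2) auto
  ultimately show ?thesis using bd by fastforce
qed

lemma fam_summable:
  fixes e :: "'i set \<Rightarrow> real"
  assumes nn: "\<And>T. e T \<ge> 0"
    and bd: "\<And>S. finite S \<Longrightarrow> S \<subseteq> N \<Longrightarrow> sum e (Pow S) \<le> B"
  shows "e summable_on {T. finite T \<and> T \<subseteq> N}" "infsum e {T. finite T \<and> T \<subseteq> N} \<le> B"
proof -
  have fb: "sum e G \<le> B" if "finite G" "G \<subseteq> {T. finite T \<and> T \<subseteq> N}" for G
    by (rule fam_bound[where N=N and B=B, OF nn bd that])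
  have bdd: "bdd_above (sum e ` {G. G \<subseteq> {T. finite T \<and> T \<subseteq> N} \<and> finite G})"
  proof (rule bdd_aboveI[where M=B])
    fix x assume "x \<in> sum e ` {G. G \<subseteq> {T. finite T \<and> T \<subseteq> N} \<and> finite G}"
    then obtain G where "x = sum e G" "finite G" "G \<subseteq> {T. finite T \<and> T \<subseteq> N}" by blast
    then show "x \<le> B" using fb by blast
  qed
  show sm: "e summable_on {T. finite T \<and> T \<subseteq> N}"
    by (rule nonneg_bdd_above_summable_on[OF _ bdd]) (rule nn)
  show "infsum e {T. finite T \<and> T \<subseteq> N} \<le> B"
    by (rule infsum_le_finite_sums[OF sm]) (rule fb)
qed

lemma infsum_finite_sum:
  fixes g :: "'k \<Rightarrow> 'i \<Rightarrow> real"
  assumes "finite F" "\<And>k. k \<in> F \<Longrightarrow> g k summable_on A"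
  shows "(\<Sum>k\<in>F. infsum (g k) A) = infsum (\<lambda>x. \<Sum>k\<in>F. g k x) A"
    "(\<lambda>x. \<Sum>k\<in>F. g k x) summable_on A"
  using assms
proof (induction F rule: finite_induct)
  case empty
  { case 1 show ?case by simp }
  { case 2 show ?case by simp }
next
  case (insert a F)
  { case 1 
    then show ?case using insert by (simp add: infsum_add)
  }
  { case 2
    then show ?case using insert by (simp add: summable_on_add)
  }
qed

definition sh :: "'i set \<Rightarrow> ('i set \<Rightarrow> real) \<Rightarrow> 'i \<Rightarrow> real" where
  "sh N d k = infsum (\<lambda>S. d S / real (card S)) {S. finite S \<and> k \<in> S \<and> S \<subseteq> N}"

lemma tv_abstract:
  fixes d1 d2 :: "'i set \<Rightarrow> real"
  assumes nn1: "\<And>T. d1 T \<ge> 0" and nn2: "\<And>T. d2 T \<ge> 0"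
    and b1: "\<And>S. finite S \<Longrightarrow> S \<subseteq> N \<Longrightarrow> sum d1 (Pow S) \<le> 1"
    and b2: "\<And>S. finite S \<Longrightarrow> S \<subseteq> N \<Longrightarrow> sum d2 (Pow S) \<le> 1"
    and bd: "\<And>S. finite S \<Longrightarrow> S \<subseteq> N \<Longrightarrow> (\<Sum>T\<in>Pow S. \<bar>d1 T - d2 T\<bar>) \<le> K"
  shows "infsum (\<lambda>i. \<bar>sh N d1 i - sh N d2 i\<bar>) N \<le> K"
proof -
  define \<A> where "\<A> = {T. finite T \<and> T \<subseteq> N}"
  define e where "e T = \<bar>d1 T - d2 T\<bar>" for T
  have enn: "e T \<ge> 0" for T unfolding e_def by simp
  have K0: "K \<ge> 0" using bd[of "{}"] by simp
  have esum: "e summable_on \<A>" and einf: "infsum e \<A> \<le> K"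
    using fam_summable[of e N K] enn bd unfolding \<A>_def e_def by auto
  have d1sum: "d1 summable_on \<A>" using fam_summable[of d1 N 1] nn1 b1 unfolding \<A>_def by auto
  have d2sum: "d2 summable_on \<A>" using fam_summable[of d2 N 1] nn2 b2 unfolding \<A>_def by auto
  define A where "A k = {S. finite S \<and> k \<in> S \<and> S \<subseteq> N}" for k
  have AA: "A k \<subseteq> \<A>" for k unfolding A_def \<A>_def by auto
  have ptw: "\<bar>sh N d1 k - sh N d2 k\<bar> \<le> infsum (\<lambda>T. if k \<in> T then e T / real (card T) else 0) \<A>" for k
  proof -
    have s1: "(\<lambda>S. d1 S / real (card S)) summable_on A k"
      by (rule summable_on_comparison_test[OF summable_on_subset[OF d1sum AA]])
         (simp_all add: div_card_le nn1)
    have s2: "(\<lambda>S. d2 S / real (card S)) summable_on A k"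
      by (rule summable_on_comparison_test[OF summable_on_subset[OF d2sum AA]])
         (simp_all add: div_card_le nn2)
    have "sh N d1 k - sh N d2 k = infsum (\<lambda>S. d1 S / real (card S) - d2 S / real (card S)) (A k)"
      unfolding sh_def A_def[symmetric] by (rule infsum_diff'[OF s1 s2, symmetric])
    also have "\<dots> = infsum (\<lambda>S. (d1 S - d2 S) / real (card S)) (A k)"
      by (simp add: diff_divide_distrib)
    finally have eq: "sh N d1 k - sh N d2 k = infsum (\<lambda>S. (d1 S - d2 S) / real (card S)) (A k)" .
    have es: "(\<lambda>S. e S / real (card S)) summable_on A k"
      by (rule summable_on_comparison_test[OF summable_on_subset[OF esum AA]])
         (simp_all add: div_card_le enn)
    have abss: "(\<lambda>S. norm ((d1 S - d2 S) / real (card S))) summable_on A k"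
      using es by (simp add: e_def abs_div)
    have "\<bar>sh N d1 k - sh N d2 k\<bar> \<le> infsum (\<lambda>S. norm ((d1 S - d2 S) / real (card S))) (A k)"
      unfolding eq using norm_infsum_bound[OF abss] by simp
    also have "\<dots> = infsum (\<lambda>S. e S / real (card S)) (A k)"
      by (simp add: e_def abs_div)
    also have "\<dots> = infsum (\<lambda>T. if k \<in> T then e T / real (card T) else 0) \<A>"
      by (rule infsum_cong_neutral) (auto simp: A_def \<A>_def)
    finally show ?thesis .
  qed
  have gs: "(\<lambda>T. if k \<in> T then e T / real (card T) else 0) summable_on \<A>" for k
    by (rule summable_on_comparison_test[OF esum]) (simp_all add: div_card_le enn)
  have fin: "(\<Sum>k\<in>F. \<bar>sh N d1 k - sh N d2 k\<bar>) \<le> K" if F: "finite F" "F \<subseteq> N" for F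
  proof -
    have "(\<Sum>k\<in>F. \<bar>sh N d1 k - sh N d2 k\<bar>) \<le> (\<Sum>k\<in>F. infsum (\<lambda>T. if k \<in> T then e T / real (card T) else 0) \<A>)"
      by (intro sum_mono ptw)
    also have "\<dots> = infsum (\<lambda>T. \<Sum>k\<in>F. if k \<in> T then e T / real (card T) else 0) \<A>"
      using infsum_finite_sum(1)[OF F(1) gs] .
    also have "\<dots> \<le> infsum e \<A>"
    proof (rule infsum_mono[OF infsum_finite_sum(2)[OF F(1) gs] esum])
      fix T assume T: "T \<in> \<A>"
      have "(\<Sum>k\<in>F. if k \<in> T then e T / real (card T) else 0) = real (card (F \<inter> T)) * (e T / real (card T))"
        using F(1) by (simp add: sum.If_cases)
      also have "\<dots> \<le> e T"
      proof (cases "card T = 0")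
        case True then show ?thesis using enn by simp
      next
        case False
        have "card (F \<inter> T) \<le> card T" using T unfolding \<A>_def by (intro card_mono) auto
        then have "real (card (F \<inter> T)) / real (card T) \<le> 1" using False by simp
        then have "e T * (real (card (F \<inter> T)) / real (card T)) \<le> e T * 1"
          using enn by (intro mult_left_mono) auto
        then show ?thesis by (simp add: mult.commute)
      qed
      finally show "(\<Sum>k\<in>F. if k \<in> T then e T / real (card T) else 0) \<le> e T" .
    qed
    also have "\<dots> \<le> K" by (rule einf)
    finally show ?thesis .
  qed
  show ?thesis
  proof (cases "(\<lambda>i. \<bar>sh N d1 i - sh N d2 i\<bar>) summable_on N")
    case True
    then show ?thesis by (rule infsum_le_finite_sums) (use fin in auto)
  next
    case False
    then show ?thesis using K0 by (simp add: infsum_not_exists)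
  qed
qed


lemma quad_disc:
  fixes a b c :: real
  assumes "\<And>t. 0 \<le> a - 2 * t * b + t\<^sup>2 * c" "c \<ge> 0"
  shows "b\<^sup>2 \<le> a * c"
proof (cases "c = 0")
  case True
  have "b = 0"
  proof (rule ccontr)
    assume "b \<noteq> 0"
    have "0 \<le> a - 2 * ((a + 1) / (2 * b)) * b" using assms(1)[of "(a + 1) / (2 * b)"] True by simp
    also have "\<dots> = -1" using \<open>b \<noteq> 0\<close> by (simp add: field_simps)
    finally show False by simp
  qed
  then show ?thesis using True by simp
next
  case False
  then have c: "c > 0" using assms(2) by simp
  have "0 \<le> a - 2 * (b / c) * b + (b / c)\<^sup>2 * c" by (rule assms(1))
  also have "\<dots> = (a * c - b\<^sup>2) / c" using c by (simp add: field_simps power2_eq_square)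
  finally show ?thesis using c by (simp add: divide_nonneg_pos zero_le_divide_iff)
qed

locale shap = prob_space M for M :: "'a measure" +
  fixes Sp :: "'i \<Rightarrow> 'v measure" and Z :: "'i \<Rightarrow> 'a \<Rightarrow> 'v" and N :: "'i set"
  assumes ind: "indep_vars Sp Z N"
begin

abbreviation F where "F S \<equiv> sigmaZ M Sp Z S"
abbreviation P where "P S W \<equiv> real_cond_exp M (F S) W"

definition gen :: "'i set \<Rightarrow> 'a set set" where
  "gen S = (\<Union>j\<in>S. {Z j -` A \<inter> space M | A. A \<in> sets (Sp j)})"

lemma rv: "j \<in> N \<Longrightarrow> random_variable (Sp j) (Z j)"
  using ind unfolding indep_vars_def by auto

lemma gen_Pow: "gen S \<subseteq> Pow (space M)"
  unfolding gen_def by auto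

lemma sets_F: "sets (F S) = sigma_sets (space M) (gen S)"
  unfolding sigmaZ_def gen_def[symmetric] using gen_Pow by (simp add: sets_measure_of)

lemma space_F: "space (F S) = space M"
  unfolding sigmaZ_def gen_def[symmetric] using gen_Pow by (simp add: space_measure_of)

lemma gen_events: "S \<subseteq> N \<Longrightarrow> gen S \<subseteq> events"
  unfolding gen_def using rv by (auto intro!: measurable_sets)

lemma F_events: "S \<subseteq> N \<Longrightarrow> sets (F S) \<subseteq> events"
  unfolding sets_F using gen_events by (intro sets.sigma_sets_subset) auto

lemma subalg: "S \<subseteq> N \<Longrightarrow> subalgebra M (F S)"
  unfolding subalgebra_def using F_events space_F by auto

lemma sfs: "S \<subseteq> N \<Longrightarrow> sigma_finite_subalgebra M (F S)"
  by (rule finite_measure_subalgebra_is_sigma_finite, unfold_locales, rule subalg)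

lemma F_mono: "S \<subseteq> R \<Longrightarrow> sets (F S) \<subseteq> sets (F R)"
  unfolding sets_F gen_def by (intro sigma_sets_subseteq) auto

lemma subalg_FF: "S \<subseteq> R \<Longrightarrow> subalgebra (F R) (F S)"
  unfolding subalgebra_def using F_mono space_F by auto

definition L2 :: "('a \<Rightarrow> real) \<Rightarrow> bool" where
  "L2 W \<longleftrightarrow> W \<in> borel_measurable M \<and> integrable M (\<lambda>x. (W x)\<^sup>2)"

lemma L2_int: "L2 W \<Longrightarrow> integrable M W"
  unfolding L2_def by (auto intro: square_integrable_imp_integrable)

lemma L2_mult: 
  assumes "L2 f" "L2 g" shows "integrable M (\<lambda>x. f x * g x)"
proof (rule Bochner_Integration.integrable_bound[of M "\<lambda>x. (f x)\<^sup>2 + (g x)\<^sup>2"])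
  show "integrable M (\<lambda>x. (f x)\<^sup>2 + (g x)\<^sup>2)" using assms unfolding L2_def by auto
  show "(\<lambda>x. f x * g x) \<in> borel_measurable M" using assms unfolding L2_def by auto
  have "\<bar>f x * g x\<bar> \<le> (f x)\<^sup>2 + (g x)\<^sup>2" for x
  proof -
    have "0 \<le> (\<bar>f x\<bar> - \<bar>g x\<bar>)\<^sup>2" by simp
    then have h: "\<bar>f x\<bar> * \<bar>g x\<bar> * 2 \<le> (f x)\<^sup>2 + (g x)\<^sup>2" by (simp add: power2_eq_square algebra_simps)
    have "0 \<le> \<bar>f x\<bar> * \<bar>g x\<bar>" by simp
    moreover have "\<bar>f x * g x\<bar> = \<bar>f x\<bar> * \<bar>g x\<bar>" by (rule abs_mult)
    ultimately show ?thesis using h by linarith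
  qed
  then show "AE x in M. norm (f x * g x) \<le> norm ((f x)\<^sup>2 + (g x)\<^sup>2)" by auto
qed

lemma L2_add: assumes "L2 f" "L2 g" shows "L2 (\<lambda>x. f x + g x)"
proof -
  have "integrable M (\<lambda>x. (f x)\<^sup>2 + (g x)\<^sup>2 + 2 * (f x * g x))"
    using assms L2_mult[OF assms] unfolding L2_def by (intro Bochner_Integration.integrable_add integrable_mult_right) auto
  moreover have "(\<lambda>x. f x + g x) \<in> borel_measurable M" using assms unfolding L2_def by (intro borel_measurable_add) auto
  ultimately show ?thesis unfolding L2_def by (simp add: power2_sum mult.assoc)
qed

lemma L2_diff: assumes "L2 f" "L2 g" shows "L2 (\<lambda>x. f x - g x)"
proof -
  have "integrable M (\<lambda>x. (f x)\<^sup>2 + (g x)\<^sup>2 - 2 * (f x * g x))"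
    using assms L2_mult[OF assms] unfolding L2_def by (intro Bochner_Integration.integrable_add Bochner_Integration.integrable_diff integrable_mult_right) auto
  moreover have "(\<lambda>x. f x - g x) \<in> borel_measurable M" using assms unfolding L2_def by (intro borel_measurable_diff) auto
  ultimately show ?thesis unfolding L2_def by (simp add: power2_diff mult.assoc)
qed

lemma L2_P: assumes "S \<subseteq> N" "L2 W" shows "L2 (P S W)"
proof -
  interpret S: sigma_finite_subalgebra M "F S" by (rule sfs[OF assms(1)])
  have "integrable M (\<lambda>x. (P S W x)\<^sup>2)"
    by (rule S.integrable_convex_cond_exp[where I=UNIV and q="\<lambda>x. x\<^sup>2"])
       (use assms(2) in \<open>auto simp: L2_int convex_power2 L2_def\<close>)
  then show ?thesis unfolding L2_def by auto
qed

lemma P_sym_aux: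
  assumes "S \<subseteq> N" "L2 f" "L2 g"
  shows "(\<integral>x. P S f x * g x \<partial>M) = (\<integral>x. P S f x * P S g x \<partial>M)"
proof -
  interpret S: sigma_finite_subalgebra M "F S" by (rule sfs[OF assms(1)])
  show ?thesis
    by (rule S.real_cond_exp_intg(2)[symmetric])
       (use assms L2_mult L2_P in \<open>auto simp: L2_def\<close>)
qed

lemma P_sym:
  assumes "S \<subseteq> N" "L2 f" "L2 g"
  shows "(\<integral>x. P S f x * g x \<partial>M) = (\<integral>x. f x * P S g x \<partial>M)"
  using P_sym_aux[OF assms] P_sym_aux[OF assms(1,3,2)] by (simp add: mult.commute)

lemma P_sq:
  assumes "S \<subseteq> N" "L2 f"
  shows "(\<integral>x. P S f x * f x \<partial>M) = (\<integral>x. (P S f x)\<^sup>2 \<partial>M)"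
  using P_sym_aux[OF assms assms(2)] by (simp add: power2_eq_square)

lemma CS:
  assumes "L2 f" "L2 g"
  shows "(\<integral>x. f x * g x \<partial>M)\<^sup>2 \<le> (\<integral>x. (f x)\<^sup>2 \<partial>M) * (\<integral>x. (g x)\<^sup>2 \<partial>M)"
proof (rule quad_disc)
  fix t :: real
  have i1: "integrable M (\<lambda>x. (f x)\<^sup>2)" "integrable M (\<lambda>x. (g x)\<^sup>2)" using assms unfolding L2_def by auto
  have i2: "integrable M (\<lambda>x. f x * g x)" using L2_mult[OF assms] .
  have "0 \<le> (\<integral>x. (f x - t * g x)\<^sup>2 \<partial>M)" by simp
  also have "(\<integral>x. (f x - t * g x)\<^sup>2 \<partial>M) = (\<integral>x. (f x)\<^sup>2 - 2 * t * (f x * g x) + t\<^sup>2 * (g x)\<^sup>2 \<partial>M)"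
    by (simp add: power2_diff power_mult_distrib algebra_simps)
  also have "\<dots> = (\<integral>x. (f x)\<^sup>2 \<partial>M) - 2 * t * (\<integral>x. f x * g x \<partial>M) + t\<^sup>2 * (\<integral>x. (g x)\<^sup>2 \<partial>M)"
    using i1 i2 by simp
  finally show "0 \<le> (\<integral>x. (f x)\<^sup>2 \<partial>M) - 2 * t * (\<integral>x. f x * g x \<partial>M) + t\<^sup>2 * (\<integral>x. (g x)\<^sup>2 \<partial>M)" .
qed simp

lemma P_le:
  assumes "S \<subseteq> N" "L2 f"
  shows "(\<integral>x. (P S f x)\<^sup>2 \<partial>M) \<le> (\<integral>x. (f x)\<^sup>2 \<partial>M)"
proof -
  let ?a = "(\<integral>x. (P S f x)\<^sup>2 \<partial>M)" and ?c = "(\<integral>x. (f x)\<^sup>2 \<partial>M)"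
  have h: "?a * ?a \<le> ?a * ?c" using CS[OF L2_P[OF assms] assms(2)] P_sq[OF assms] by (simp only: power2_eq_square)
  have c0: "?c \<ge> 0" by simp
  have "?a \<ge> 0" by simp
  then consider "?a = 0" | "?a > 0" by linarith
  then show ?thesis
  proof cases
    case 1 then show ?thesis using c0 by linarith
  next
    case 2 then show ?thesis using h mult_le_cancel_left_pos[OF 2] by blast
  qed
qed


lemma P_int:
  assumes "S \<subseteq> N" "integrable M W"
  shows "(\<integral>x. P S W x \<partial>M) = (\<integral>x. W x \<partial>M)"
proof -
  interpret S: sigma_finite_subalgebra M "F S" by (rule sfs[OF assms(1)])
  show ?thesis using S.real_cond_exp_int(2)[OF assms(2)] .
qed

lemma P_empty:
  assumes "integrable M W"
  shows "AE x in M. P {} W x = (\<integral>x. W x \<partial>M)"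
proof -
  interpret S: sigma_finite_subalgebra M "F {}" by (rule sfs) simp
  have sets0: "sets (F {}) = {{}, space M}" unfolding sets_F gen_def by (simp add: sigma_sets_empty_eq)
  show ?thesis
  proof (rule S.real_cond_exp_charact)
    fix A assume "A \<in> sets (F {})"
    then have "A = {} \<or> A = space M" using sets0 by auto
    then show "(\<integral>x\<in>A. W x \<partial>M) = (\<integral>x\<in>A. (\<integral>x. W x \<partial>M) \<partial>M)"
    proof
      assume "A = {}" then show ?thesis by (simp add: set_lebesgue_integral_def)
    next
      assume A: "A = space M"
      have "(\<integral>x\<in>space M. (\<integral>x. W x \<partial>M) \<partial>M) = (\<integral>x. (\<integral>x. W x \<partial>M) \<partial>M)"
        by (rule set_integral_space) simp
      then show ?thesis unfolding A using set_integral_space[OF assms] by (simp add: prob_space)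
    qed
  next
    show "(\<lambda>x. \<integral>x. W x \<partial>M) \<in> borel_measurable (F {})" by simp
  qed (use assms in auto)
qed

definition E :: "'i \<Rightarrow> 'a set set" where
  "E i = {Z i -` A \<inter> space M | A. A \<in> sets (Sp i)}"

lemma gen_E: "gen S = (\<Union>i\<in>S. E i)"
  unfolding gen_def E_def by simp

lemma indep_FF:
  assumes "S \<subseteq> N" "T \<subseteq> N" "S \<inter> T = {}"
  shows "indep_set (sets (F S)) (sets (F T))"
proof -
  have i0: "indep_sets (\<lambda>i. sigma_sets (space M) (E i)) N"
    using ind unfolding indep_vars_def E_def by auto
  have i1: "indep_sets E (\<Union>j\<in>UNIV. case_bool S T j)"
    by (rule indep_sets_mono[OF i0]) (use assms in \<open>auto split: bool.splits\<close>)
  have st: "Int_stable (E i)" for i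
    unfolding Int_stable_def E_def
  proof (clarify)
    fix A B assume "A \<in> sets (Sp i)" "B \<in> sets (Sp i)"
    then show "\<exists>C. (Z i -` A \<inter> space M) \<inter> (Z i -` B \<inter> space M) = Z i -` C \<inter> space M \<and> C \<in> sets (Sp i)"
      by (intro exI[of _ "A \<inter> B"]) auto
  qed
  have dj: "disjoint_family_on (case_bool S T) UNIV"
    using assms(3) unfolding disjoint_family_on_def by (auto split: bool.splits)
  have i2: "indep_sets (\<lambda>j. sigma_sets (space M) (\<Union>i\<in>case_bool S T j. E i)) UNIV"
    by (rule indep_sets_collect_sigma[OF i1 st dj])
  show ?thesis unfolding indep_set_def
    by (rule indep_sets_mono_sets[OF i2]) (auto simp: sets_F gen_E split: bool.splits)
qed

lemma indep_var_FF:
  fixes X1 X2 :: "'a \<Rightarrow> real"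
  assumes "S \<subseteq> N" "T \<subseteq> N" "S \<inter> T = {}"
    and X1: "X1 \<in> borel_measurable (F S)" and X2: "X2 \<in> borel_measurable (F T)"
  shows "indep_var borel X1 borel X2"
proof -
  have m1: "X1 \<in> borel_measurable M" using measurable_from_subalg[OF subalg[OF assms(1)] X1] .
  have m2: "X2 \<in> borel_measurable M" using measurable_from_subalg[OF subalg[OF assms(2)] X2] .
  have s1: "sigma_sets (space M) {X1 -` A \<inter> space M | A. A \<in> sets borel} \<subseteq> sets (F S)"
  proof -
    have "{X1 -` A \<inter> space M | A. A \<in> sets borel} \<subseteq> sets (F S)"
    proof clarify
      fix A :: "real set" assume "A \<in> sets borel"
      then have "X1 -` A \<inter> space (F S) \<in> sets (F S)" by (intro measurable_sets[OF X1]) auto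
      then show "X1 -` A \<inter> space M \<in> sets (F S)" by (simp add: space_F)
    qed
    then show ?thesis using sets.sigma_sets_subset[of _ "F S"] space_F[of S] by auto
  qed
  have s2: "sigma_sets (space M) {X2 -` A \<inter> space M | A. A \<in> sets borel} \<subseteq> sets (F T)"
  proof -
    have "{X2 -` A \<inter> space M | A. A \<in> sets borel} \<subseteq> sets (F T)"
    proof clarify
      fix A :: "real set" assume "A \<in> sets borel"
      then have "X2 -` A \<inter> space (F T) \<in> sets (F T)" by (intro measurable_sets[OF X2]) auto
      then show "X2 -` A \<inter> space M \<in> sets (F T)" by (simp add: space_F)
    qed
    then show ?thesis using sets.sigma_sets_subset[of _ "F T"] space_F[of T] by auto
  qed
  have i: "indep_sets (case_bool (sets (F S)) (sets (F T))) UNIV"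
    using indep_FF[OF assms(1-3)] unfolding indep_set_def .
  show ?thesis unfolding indep_var_eq
  proof (intro conjI)
    show "random_variable borel X1" using m1 by simp
    show "random_variable borel X2" using m2 by simp
    show "indep_set (sigma_sets (space M) {X1 -` A \<inter> space M |A. A \<in> sets borel})
       (sigma_sets (space M) {X2 -` A \<inter> space M |A. A \<in> sets borel})"
      unfolding indep_set_def
      by (rule indep_sets_mono_sets[OF i]) (use s1 s2 in \<open>auto split: bool.splits\<close>)
  qed
qed


lemma set_int_compl:
  fixes h :: "'a \<Rightarrow> real"
  assumes "integrable M h" "A \<in> events"
  shows "(\<integral>x\<in>space M - A. h x \<partial>M) = (\<integral>x. h x \<partial>M) - (\<integral>x\<in>A. h x \<partial>M)"
proof -
  have i: "integrable M (\<lambda>x. indicator A x * h x)"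
    using integrable_mult_indicator[OF assms(2,1)] by simp
  have "(\<integral>x\<in>space M - A. h x \<partial>M) = (\<integral>x. h x - indicator A x * h x \<partial>M)"
    unfolding set_lebesgue_integral_def
    by (rule Bochner_Integration.integral_cong) (auto simp: indicator_def)
  also have "\<dots> = (\<integral>x. h x \<partial>M) - (\<integral>x. indicator A x * h x \<partial>M)"
    using assms(1) i by simp
  finally show ?thesis by (simp add: set_lebesgue_integral_def)
qed

lemma commute_AE:
  assumes SN: "S \<subseteq> N" and RN: "R \<subseteq> N" and f: "L2 f"
  shows "AE x in M. P R (P S f) x = P (S \<inter> R) f x"
proof -
  have SRN: "S \<inter> R \<subseteq> N" and RSN: "R - S \<subseteq> N" using SN RN by auto
  interpret R: sigma_finite_subalgebra M "F R" by (rule sfs[OF RN])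
  interpret S: sigma_finite_subalgebra M "F S" by (rule sfs[OF SN])
  interpret SR: sigma_finite_subalgebra M "F (S \<inter> R)" by (rule sfs[OF SRN])
  have intf: "integrable M f" using L2_int[OF f] .
  have intU: "integrable M (P S f)" using S.real_cond_exp_int(1)[OF intf] .
  have intV: "integrable M (P (S \<inter> R) f)" using SR.real_cond_exp_int(1)[OF intf] .
  have Umeas: "P S f \<in> borel_measurable (F S)" by simp
  have Vmeas: "P (S \<inter> R) f \<in> borel_measurable (F R)"
    by (rule measurable_from_subalg[OF subalg_FF[of "S \<inter> R" R]]) auto
  define G where "G = {B \<inter> C | B C. B \<in> sets (F (S \<inter> R)) \<and> C \<in> sets (F (R - S))}"
  have G_ev: "G \<subseteq> events"
    unfolding G_def using F_events[OF SRN] F_events[OF RSN] by auto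
  then have G_Pow: "G \<subseteq> Pow (space M)" using sets.sets_into_space by auto
  have G_st: "Int_stable G"
    unfolding Int_stable_def G_def
  proof clarify
    fix B1 C1 B2 C2
    assume "B1 \<in> sets (F (S \<inter> R))" "C1 \<in> sets (F (R - S))" "B2 \<in> sets (F (S \<inter> R))" "C2 \<in> sets (F (R - S))"
    then show "\<exists>B C. B1 \<inter> C1 \<inter> (B2 \<inter> C2) = B \<inter> C \<and> B \<in> sets (F (S \<inter> R)) \<and> C \<in> sets (F (R - S))"
      by (intro exI[of _ "B1 \<inter> B2"] exI[of _ "C1 \<inter> C2"]) auto
  qed
  have FR_G: "sets (F R) \<subseteq> sigma_sets (space M) G"
    unfolding sets_F[of R]
  proof (rule sigma_sets_mono, rule subsetI)
    fix x assume "x \<in> gen R"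
    then obtain j A where j: "j \<in> R" "A \<in> sets (Sp j)" "x = Z j -` A \<inter> space M"
      unfolding gen_def by auto
    have top1: "space M \<in> sets (F (S \<inter> R))" using sets.top[of "F (S \<inter> R)"] by (simp add: space_F)
    have top2: "space M \<in> sets (F (R - S))" using sets.top[of "F (R - S)"] by (simp add: space_F)
    have "x \<in> G"
    proof (cases "j \<in> S")
      case True
      then have "x \<in> gen (S \<inter> R)" using j unfolding gen_def by auto
      then have "x \<in> sets (F (S \<inter> R))" unfolding sets_F by auto
      moreover have "x = x \<inter> space M" using j by auto
      ultimately show ?thesis unfolding G_def using top2 by blast
    next
      case False
      then have "x \<in> gen (R - S)" using j unfolding gen_def by auto
      then have "x \<in> sets (F (R - S))" unfolding sets_F by auto
      moreover have "x = space M \<inter> x" using j by auto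
      ultimately show ?thesis unfolding G_def using top1 by blast
    qed
    then show "x \<in> sigma_sets (space M) G" by auto
  qed
  have sG_ev: "sigma_sets (space M) G \<subseteq> events"
    using G_ev by (intro sets.sigma_sets_subset) auto
  have key: "(\<integral>x\<in>A. P S f x \<partial>M) = (\<integral>x\<in>A. P (S \<inter> R) f x \<partial>M)" if A: "A \<in> sigma_sets (space M) G" for A
    using G_st G_Pow A
  proof (induction rule: sigma_sets_induct_disjoint)
    case (basic A)
    then obtain B C where BC: "A = B \<inter> C" "B \<in> sets (F (S \<inter> R))" "C \<in> sets (F (R - S))"
      unfolding G_def by auto
    have BS: "B \<in> sets (F S)" using BC(2) F_mono[of "S \<inter> R" S] by auto
    have Bev: "B \<in> events" using BC(2) F_events[OF SRN] by auto
    have Cev: "C \<in> events" using BC(3) F_events[OF RSN] by auto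
    have intC: "integrable M (indicator C :: 'a \<Rightarrow> real)"
      using Cev by (intro integrable_real_indicator) (auto simp: emeasure_eq_measure)
    have Cm: "(indicator C :: 'a \<Rightarrow> real) \<in> borel_measurable (F (R - S))"
      using BC(3) by (rule borel_measurable_indicator)
    have prod: "(\<integral>x\<in>A. h x \<partial>M) = (\<integral>x\<in>B. f x \<partial>M) * (\<integral>x. indicator C x \<partial>M)"
      if hm: "h \<in> borel_measurable (F T)" and hi: "integrable M h" and TN: "T \<subseteq> N" and TS: "T \<subseteq> S"
        and BT: "B \<in> sets (F T)" and hB: "(\<integral>x\<in>B. h x \<partial>M) = (\<integral>x\<in>B. f x \<partial>M)" for h T
    proof -
      have m1: "(\<lambda>x. indicator B x * h x) \<in> borel_measurable (F T)"
        using borel_measurable_indicator[OF BT] hm by (rule borel_measurable_times)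
      have iv: "indep_var borel (\<lambda>x. indicator B x * h x) borel (indicator C)"
        by (rule indep_var_FF[OF TN RSN _ m1 Cm]) (use TS in auto)
      have i1: "integrable M (\<lambda>x. indicator B x * h x)"
        using integrable_mult_indicator[OF Bev hi] by simp
      have "(\<integral>x\<in>A. h x \<partial>M) = (\<integral>x. (indicator B x * h x) * indicator C x \<partial>M)"
        unfolding set_lebesgue_integral_def BC(1)
        by (rule Bochner_Integration.integral_cong) (auto simp: indicator_inter_arith)
      also have "\<dots> = (\<integral>x. indicator B x * h x \<partial>M) * (\<integral>x. indicator C x \<partial>M)"
        by (rule indep_var_lebesgue_integral[OF iv i1 intC])
      also have "(\<integral>x. indicator B x * h x \<partial>M) = (\<integral>x\<in>B. h x \<partial>M)"
        by (simp add: set_lebesgue_integral_def)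
      finally show ?thesis using hB by simp
    qed
    have "(\<integral>x\<in>A. P S f x \<partial>M) = (\<integral>x\<in>B. f x \<partial>M) * (\<integral>x. indicator C x \<partial>M)"
      by (rule prod[OF Umeas intU SN order.refl BS]) (rule S.real_cond_exp_intA[OF intf BS, symmetric])
    also have "\<dots> = (\<integral>x\<in>A. P (S \<inter> R) f x \<partial>M)"
      by (rule prod[OF _ intV SRN _ BC(2), symmetric])
         (auto intro: SR.real_cond_exp_intA[OF intf BC(2), symmetric])
    finally show ?case .
  next
    case empty
    then show ?case by (simp add: set_lebesgue_integral_def)
  next
    case (compl A)
    have Aev: "A \<in> events" using compl(1) sG_ev by auto
    have "(\<integral>x. P S f x \<partial>M) = (\<integral>x. P (S \<inter> R) f x \<partial>M)"
      using P_int[OF SN intf] P_int[OF SRN intf] by simp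
    then show ?case using compl(2) set_int_compl[OF intU Aev] set_int_compl[OF intV Aev] by simp
  next
    case (union A)
    have Aev: "\<And>i. A i \<in> events" using union(2) sG_ev by auto
    have UAev: "(\<Union>i. A i) \<in> events" using Aev by auto
    have dj: "\<And>i j. i \<noteq> j \<Longrightarrow> A i \<inter> A j = {}" using union(1) unfolding disjoint_family_on_def by auto
    have s1: "set_integrable M (\<Union>i. A i) (P S f)"
      unfolding set_integrable_def using integrable_mult_indicator[OF UAev intU] .
    have s2: "set_integrable M (\<Union>i. A i) (P (S \<inter> R) f)"
      unfolding set_integrable_def using integrable_mult_indicator[OF UAev intV] .
    show ?case
      using lebesgue_integral_countable_add[OF Aev dj s1] lebesgue_integral_countable_add[OF Aev dj s2] union(3)
      by simp
  qed
  show ?thesis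
  proof (rule R.real_cond_exp_charact)
    fix A assume "A \<in> sets (F R)"
    then show "(\<integral>x\<in>A. P S f x \<partial>M) = (\<integral>x\<in>A. P (S \<inter> R) f x \<partial>M)"
      using key FR_G by auto
  qed (use intU intV Vmeas in auto)
qed

lemma commute:
  assumes "S \<subseteq> N" "R \<subseteq> N" "L2 f" "L2 g"
  shows "(\<integral>x. P S f x * P R g x \<partial>M) = (\<integral>x. P (S \<inter> R) f x * g x \<partial>M)"
proof -
  have "(\<integral>x. P S f x * P R g x \<partial>M) = (\<integral>x. P R (P S f) x * g x \<partial>M)"
    using P_sym[OF assms(2) L2_P[OF assms(1,3)] assms(4)] by simp
  also have "\<dots> = (\<integral>x. P (S \<inter> R) f x * g x \<partial>M)"
  proof (rule integral_cong_AE)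
    show "AE x in M. P R (P S f) x * g x = P (S \<inter> R) f x * g x"
      using commute_AE[OF assms(1-3)] by auto
  qed (use assms(4) in \<open>auto simp: L2_def\<close>)
  finally show ?thesis .
qed


lemma L2_cmult: assumes "L2 f" shows "L2 (\<lambda>x. c * f x)"
proof -
  have "integrable M (\<lambda>x. c\<^sup>2 * (f x)\<^sup>2)" using assms unfolding L2_def by (intro integrable_mult_right) auto
  moreover have "(\<lambda>x. c * f x) \<in> borel_measurable M" using assms unfolding L2_def by (intro borel_measurable_times) auto
  ultimately show ?thesis using assms unfolding L2_def by (simp add: power_mult_distrib)
qed

lemma L2_sum: "finite I \<Longrightarrow> (\<And>i. i \<in> I \<Longrightarrow> L2 (h i)) \<Longrightarrow> L2 (\<lambda>x. \<Sum>i\<in>I. h i x)"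
proof (induction I rule: finite_induct)
  case empty
  then show ?case by (simp add: L2_def)
next
  case (insert a I)
  then show ?case by (simp add: L2_add)
qed

definition B :: "('a \<Rightarrow> real) \<Rightarrow> ('a \<Rightarrow> real) \<Rightarrow> 'i set \<Rightarrow> real" where
  "B W W' S = (\<integral>x. P S W x * W' x \<partial>M)"

definition D :: "'i set \<Rightarrow> ('a \<Rightarrow> real) \<Rightarrow> 'a \<Rightarrow> real" where
  "D T W x = (\<Sum>S\<in>Pow T. (-1) ^ card (T - S) * P S W x)"

lemma L2_D: assumes "finite T" "T \<subseteq> N" "L2 W" shows "L2 (D T W)"
proof -
  have "L2 (\<lambda>x. \<Sum>S\<in>Pow T. (-1) ^ card (T - S) * P S W x)"
    using assms by (intro L2_sum L2_cmult L2_P) auto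
  then show ?thesis unfolding D_def[abs_def] .
qed

lemma D_prod:
  assumes T: "finite T" "T \<subseteq> N" and W: "L2 W" "L2 W'"
  shows "(\<integral>x. D T W x * D T W' x \<partial>M) = mob (B W W') T"
proof -
  have ii: "integrable M (\<lambda>x. P S W x * P R W' x)" if "S \<in> Pow T" "R \<in> Pow T" for S R
    using that T W by (intro L2_mult L2_P) auto
  have "(\<integral>x. D T W x * D T W' x \<partial>M) =
      (\<integral>x. (\<Sum>S\<in>Pow T. \<Sum>R\<in>Pow T. ((-1) ^ card (T - S) * (-1) ^ card (T - R)) * (P S W x * P R W' x)) \<partial>M)"
    unfolding D_def sum_product by (simp add: algebra_simps)
  also have "\<dots> = (\<Sum>S\<in>Pow T. \<Sum>R\<in>Pow T. ((-1) ^ card (T - S) * (-1) ^ card (T - R)) * (\<integral>x. P S W x * P R W' x \<partial>M))"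
  proof -
    have "(\<integral>x. (\<Sum>S\<in>Pow T. \<Sum>R\<in>Pow T. ((-1) ^ card (T - S) * (-1) ^ card (T - R)) * (P S W x * P R W' x)) \<partial>M)
       = (\<Sum>S\<in>Pow T. (\<integral>x. (\<Sum>R\<in>Pow T. ((-1) ^ card (T - S) * (-1) ^ card (T - R)) * (P S W x * P R W' x)) \<partial>M))"
      by (rule Bochner_Integration.integral_sum)
         (intro Bochner_Integration.integrable_sum integrable_mult_right ii; simp)
    also have "\<dots> = (\<Sum>S\<in>Pow T. \<Sum>R\<in>Pow T. (\<integral>x. ((-1) ^ card (T - S) * (-1) ^ card (T - R)) * (P S W x * P R W' x) \<partial>M))"
      by (intro sum.cong refl Bochner_Integration.integral_sum)
         (intro integrable_mult_right ii; simp)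
    also have "\<dots> = (\<Sum>S\<in>Pow T. \<Sum>R\<in>Pow T. ((-1) ^ card (T - S) * (-1) ^ card (T - R)) * (\<integral>x. P S W x * P R W' x \<partial>M))"
      by (intro sum.cong refl) (rule integral_mult_right_zero)
    finally show ?thesis .
  qed
  also have "\<dots> = (\<Sum>S\<in>Pow T. \<Sum>R\<in>Pow T. (-1) ^ card (T - S) * (-1) ^ card (T - R) * B W W' (S \<inter> R))"
  proof (intro sum.cong refl)
    fix S R assume "S \<in> Pow T" "R \<in> Pow T"
    then show "((-1) ^ card (T - S) * (-1) ^ card (T - R)) * (\<integral>x. P S W x * P R W' x \<partial>M) =
        (-1) ^ card (T - S) * (-1) ^ card (T - R) * B W W' (S \<inter> R)"
      using commute[of S R W W'] T W unfolding B_def by auto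
  qed
  also have "\<dots> = mob (B W W') T" by (rule mob_double[OF T(1)])
  finally show ?thesis .
qed

lemma mob_B_nonneg:
  assumes "finite T" "T \<subseteq> N" "L2 W"
  shows "mob (B W W) T \<ge> 0"
proof -
  have "0 \<le> (\<integral>x. D T W x * D T W x \<partial>M)" by (intro integral_nonneg_AE) auto
  then show ?thesis using D_prod[OF assms assms(3)] by simp
qed

lemma B_sym: assumes "S \<subseteq> N" "L2 W" "L2 W'" shows "B W W' S = B W' W S"
  unfolding B_def using P_sym[OF assms] by (simp add: mult.commute)

lemma B_le: assumes "S \<subseteq> N" "L2 W" shows "B W W S \<le> (\<integral>x. (W x)\<^sup>2 \<partial>M)"
  unfolding B_def using P_sq[OF assms] P_le[OF assms] by simp

lemma B_bilin:
  assumes S: "S \<subseteq> N" and W: "L2 W1" "L2 W2"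
  shows "B (\<lambda>x. W1 x - W2 x) (\<lambda>x. W1 x + W2 x) S = B W1 W1 S - B W2 W2 S"
proof -
  interpret S: sigma_finite_subalgebra M "F S" by (rule sfs[OF S])
  have ae: "AE x in M. P S (\<lambda>x. W1 x - W2 x) x = P S W1 x - P S W2 x"
    using S.real_cond_exp_diff[OF L2_int[OF W(1)] L2_int[OF W(2)]] .
  have p1: "L2 (P S W1)" "L2 (P S W2)" using L2_P[OF S] W by auto
  have i: "integrable M (\<lambda>x. P S W1 x * W1 x)" "integrable M (\<lambda>x. P S W1 x * W2 x)"
     "integrable M (\<lambda>x. P S W2 x * W1 x)" "integrable M (\<lambda>x. P S W2 x * W2 x)"
    using p1 W by (auto intro: L2_mult)
  have "B (\<lambda>x. W1 x - W2 x) (\<lambda>x. W1 x + W2 x) S = (\<integral>x. (P S W1 x - P S W2 x) * (W1 x + W2 x) \<partial>M)"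
    unfolding B_def
  proof (rule integral_cong_AE)
    show "AE x in M. P S (\<lambda>x. W1 x - W2 x) x * (W1 x + W2 x) = (P S W1 x - P S W2 x) * (W1 x + W2 x)"
      using ae by auto
  qed (use W in \<open>auto simp: L2_def\<close>)
  also have "\<dots> = (\<integral>x. (P S W1 x * W1 x + P S W1 x * W2 x) - (P S W2 x * W1 x + P S W2 x * W2 x) \<partial>M)"
    by (simp add: algebra_simps)
  also have "\<dots> = B W1 W1 S + B W1 W2 S - B W2 W1 S - B W2 W2 S"
    unfolding B_def using i by simp
  finally show ?thesis using B_sym[OF S W] by simp
qed

lemma mob_cong: "(\<And>U. U \<subseteq> T \<Longrightarrow> v U = w U) \<Longrightarrow> mob v T = mob w T"
  unfolding mob_def by (intro sum.cong) auto

lemma mob_diff: "mob v T - mob w T = mob (\<lambda>U. v U - w U) T"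
  unfolding mob_def by (simp add: sum_subtractf right_diff_distrib)

lemma abs_int_le:
  assumes "L2 f" "L2 g"
  shows "\<bar>\<integral>x. f x * g x \<partial>M\<bar> \<le> sqrt (\<integral>x. f x * f x \<partial>M) * sqrt (\<integral>x. g x * g x \<partial>M)"
proof -
  have "(\<integral>x. f x * g x \<partial>M)\<^sup>2 \<le> (\<integral>x. f x * f x \<partial>M) * (\<integral>x. g x * g x \<partial>M)"
    using CS[OF assms] by (simp add: power2_eq_square)
  then have "sqrt ((\<integral>x. f x * g x \<partial>M)\<^sup>2) \<le> sqrt ((\<integral>x. f x * f x \<partial>M) * (\<integral>x. g x * g x \<partial>M))"
    by (rule real_sqrt_le_mono)
  then show ?thesis by (simp add: real_sqrt_mult)
qed


lemma vgame_B:
  assumes X: "L2 X" "(\<integral>x. X x \<partial>M) = 0" and S: "S \<subseteq> N"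
  shows "vgame M Sp Z X S = B X X S"
proof (cases "S = {}")
  case True
  have "B X X {} = (\<integral>x. 0 * X x \<partial>M)"
    unfolding B_def
  proof (rule integral_cong_AE)
    show "AE x in M. P {} X x * X x = 0 * X x"
      using P_empty[OF L2_int[OF X(1)]] X(2) by auto
  qed (use X in \<open>auto simp: L2_def\<close>)
  then show ?thesis using True by (simp add: vgame_def)
next
  case False
  have "vgame M Sp Z X S = (\<integral>x. (P S X x - (\<integral>x. P S X x \<partial>M))\<^sup>2 \<partial>M)"
    using False by (simp add: vgame_def var_def)
  also have "(\<integral>x. P S X x \<partial>M) = 0" using P_int[OF S L2_int[OF X(1)]] X(2) by simp
  finally show ?thesis using P_sq[OF S X(1)] unfolding B_def by simp
qed

lemma main_finite:
  assumes X: "L2 X" "(\<integral>x. (X x)\<^sup>2 \<partial>M) = 1" and Y: "L2 Y" "(\<integral>x. (Y x)\<^sup>2 \<partial>M) = 1"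
    and S: "finite S" "S \<subseteq> N"
  shows "(\<Sum>T\<in>Pow S. \<bar>mob (B X X) T - mob (B Y Y) T\<bar>) \<le> 2 * sqrt (\<integral>x. (X x - Y x)\<^sup>2 \<partial>M)"
proof -
  define W1 where "W1 = (\<lambda>x. X x - Y x)"
  define W2 where "W2 = (\<lambda>x. X x + Y x)"
  have W1: "L2 W1" unfolding W1_def using L2_diff[OF X(1) Y(1)] .
  have W2: "L2 W2" unfolding W2_def using L2_add[OF X(1) Y(1)] .
  define a where "a T = mob (B W1 W1) T" for T
  define b where "b T = mob (B W2 W2) T" for T
  have TN: "finite T" "T \<subseteq> N" if "T \<in> Pow S" for T using that S by (auto intro: finite_subset)
  have a0: "a T \<ge> 0" if "T \<in> Pow S" for T unfolding a_def using mob_B_nonneg[OF TN[OF that] W1] .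
  have b0: "b T \<ge> 0" if "T \<in> Pow S" for T unfolding b_def using mob_B_nonneg[OF TN[OF that] W2] .
  have pt: "\<bar>mob (B X X) T - mob (B Y Y) T\<bar> \<le> sqrt (a T) * sqrt (b T)" if T: "T \<in> Pow S" for T
  proof -
    have "mob (B X X) T - mob (B Y Y) T = mob (B W1 W2) T"
      unfolding mob_diff W1_def W2_def
      by (rule mob_cong, rule B_bilin[symmetric]) (use TN[OF T] X Y in auto)
    also have "\<dots> = (\<integral>x. D T W1 x * D T W2 x \<partial>M)" using D_prod[OF TN[OF T] W1 W2] by simp
    finally have e: "mob (B X X) T - mob (B Y Y) T = (\<integral>x. D T W1 x * D T W2 x \<partial>M)" .
    show ?thesis unfolding e a_def b_def
      using abs_int_le[OF L2_D[OF TN[OF T] W1] L2_D[OF TN[OF T] W2]]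
            D_prod[OF TN[OF T] W1 W1] D_prod[OF TN[OF T] W2 W2] by simp
  qed
  have cs: "(\<Sum>T\<in>Pow S. sqrt (a T) * sqrt (b T)) \<le> sqrt (\<Sum>T\<in>Pow S. a T) * sqrt (\<Sum>T\<in>Pow S. b T)"
  proof -
    have "(\<Sum>T\<in>Pow S. sqrt (a T) * sqrt (b T))\<^sup>2 \<le> (\<Sum>T\<in>Pow S. (sqrt (a T))\<^sup>2) * (\<Sum>T\<in>Pow S. (sqrt (b T))\<^sup>2)"
      by (rule Cauchy_Schwarz_ineq_sum)
    also have "\<dots> = (\<Sum>T\<in>Pow S. a T) * (\<Sum>T\<in>Pow S. b T)"
      using a0 b0 by simp
    finally have h: "(\<Sum>T\<in>Pow S. sqrt (a T) * sqrt (b T))\<^sup>2 \<le> (\<Sum>T\<in>Pow S. a T) * (\<Sum>T\<in>Pow S. b T)" .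
    have "(\<Sum>T\<in>Pow S. sqrt (a T) * sqrt (b T)) \<le> sqrt ((\<Sum>T\<in>Pow S. sqrt (a T) * sqrt (b T))\<^sup>2)"
      by simp
    also have "\<dots> \<le> sqrt ((\<Sum>T\<in>Pow S. a T) * (\<Sum>T\<in>Pow S. b T))"
      using h by (rule real_sqrt_le_mono)
    finally show ?thesis by (simp add: real_sqrt_mult)
  qed
  have sa: "(\<Sum>T\<in>Pow S. a T) \<le> (\<integral>x. (W1 x)\<^sup>2 \<partial>M)"
    unfolding a_def using mob_sum[OF S(1), of "B W1 W1"] B_le[OF S(2) W1] by simp
  have sb: "(\<Sum>T\<in>Pow S. b T) \<le> (\<integral>x. (W2 x)\<^sup>2 \<partial>M)"
    unfolding b_def using mob_sum[OF S(1), of "B W2 W2"] B_le[OF S(2) W2] by simp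
  have i4: "(\<integral>x. (W1 x)\<^sup>2 \<partial>M) + (\<integral>x. (W2 x)\<^sup>2 \<partial>M) = 4"
  proof -
    have "(\<integral>x. (W1 x)\<^sup>2 \<partial>M) + (\<integral>x. (W2 x)\<^sup>2 \<partial>M) = (\<integral>x. (W1 x)\<^sup>2 + (W2 x)\<^sup>2 \<partial>M)"
      using W1 W2 unfolding L2_def by simp
    also have "\<dots> = (\<integral>x. 2 * (X x)\<^sup>2 + 2 * (Y x)\<^sup>2 \<partial>M)"
      unfolding W1_def W2_def by (simp add: power2_eq_square algebra_simps)
    also have "\<dots> = 4" using X Y unfolding L2_def by simp
    finally show ?thesis .
  qed
  have w10: "(\<integral>x. (W1 x)\<^sup>2 \<partial>M) \<ge> 0" by simp
  have sa': "sqrt (\<Sum>T\<in>Pow S. a T) \<le> sqrt (\<integral>x. (W1 x)\<^sup>2 \<partial>M)" using sa by (rule real_sqrt_le_mono)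
  have sb': "sqrt (\<Sum>T\<in>Pow S. b T) \<le> 2"
  proof -
    have "sqrt (\<Sum>T\<in>Pow S. b T) \<le> sqrt 4" using sb i4 w10 by (intro real_sqrt_le_mono) linarith
    then show ?thesis by simp
  qed
  have "(\<Sum>T\<in>Pow S. \<bar>mob (B X X) T - mob (B Y Y) T\<bar>) \<le> (\<Sum>T\<in>Pow S. sqrt (a T) * sqrt (b T))"
    by (rule sum_mono) (rule pt)
  also have "\<dots> \<le> sqrt (\<Sum>T\<in>Pow S. a T) * sqrt (\<Sum>T\<in>Pow S. b T)" by (rule cs)
  also have "\<dots> \<le> sqrt (\<integral>x. (W1 x)\<^sup>2 \<partial>M) * 2"
    by (rule mult_mono[OF sa' sb']) (use b0 in \<open>auto intro: sum_nonneg\<close>)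
  finally show ?thesis unfolding W1_def by simp
qed

end


theorem proposition2:
  fixes M :: "'a measure" and Sp :: "'i \<Rightarrow> 'v measure" and Z :: "'i \<Rightarrow> 'a \<Rightarrow> 'v"
    and N :: "'i set" and X Y :: "'a \<Rightarrow> real"
  assumes "prob_space M"
    and "countable N"
    and "\<forall>j\<in>N. standard_borel (Sp j)"
    and "prob_space.indep_vars M Sp Z N"
    and "X \<in> BZ M Sp Z N" and "Y \<in> BZ M Sp Z N"
  shows "TV N (shapley_infl M Sp Z N X) (shapley_infl M Sp Z N Y)
           \<le> sqrt (\<integral>\<omega>. (X \<omega> - Y \<omega>)\<^sup>2 \<partial>M)"
proof -
  interpret shap M Sp Z N
    unfolding shap_def shap_axioms_def using assms(1,4) by auto
  have prep: "L2 W \<and> (\<integral>x. W x \<partial>M) = 0 \<and> (\<integral>x. (W x)\<^sup>2 \<partial>M) = 1" if W: "W \<in> BZ M Sp Z N" for W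
  proof -
    have "W \<in> borel_measurable (F N)" using W unfolding BZ_def by auto
    then have "W \<in> borel_measurable M" by (rule measurable_from_subalg[OF subalg[OF order.refl]])
    then show ?thesis using W unfolding BZ_def L2_def by auto
  qed
  have X: "L2 X" "(\<integral>x. X x \<partial>M) = 0" "(\<integral>x. (X x)\<^sup>2 \<partial>M) = 1" using prep[OF assms(5)] by auto
  have Y: "L2 Y" "(\<integral>x. Y x \<partial>M) = 0" "(\<integral>x. (Y x)\<^sup>2 \<partial>M) = 1" using prep[OF assms(6)] by auto
  have dform: "harsanyi N (vgame M Sp Z W) T = (if finite T \<and> T \<noteq> {} \<and> T \<subseteq> N then mob (B W W) T else 0)"
    if W: "L2 W" "(\<integral>x. W x \<partial>M) = 0" for W T
  proof -
    have "vgame M Sp Z W {} = 0" by (simp add: vgame_def)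
    then have "harsanyi N (vgame M Sp Z W) T = (if finite T \<and> T \<noteq> {} \<and> T \<subseteq> N then mob (vgame M Sp Z W) T else 0)"
      by (simp add: harsanyi_eq)
    also have "\<dots> = (if finite T \<and> T \<noteq> {} \<and> T \<subseteq> N then mob (B W W) T else 0)"
      using vgame_B[OF W] by (auto intro!: mob_cong)
    finally show ?thesis .
  qed
  define dX where "dX = harsanyi N (vgame M Sp Z X)"
  define dY where "dY = harsanyi N (vgame M Sp Z Y)"
  have dX: "dX T = (if finite T \<and> T \<noteq> {} \<and> T \<subseteq> N then mob (B X X) T else 0)" for T
    unfolding dX_def using dform[OF X(1,2)] .
  have dY: "dY T = (if finite T \<and> T \<noteq> {} \<and> T \<subseteq> N then mob (B Y Y) T else 0)" for T
    unfolding dY_def using dform[OF Y(1,2)] .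
  have nnX: "dX T \<ge> 0" for T unfolding dX using mob_B_nonneg[OF _ _ X(1)] by auto
  have nnY: "dY T \<ge> 0" for T unfolding dY using mob_B_nonneg[OF _ _ Y(1)] by auto
  have bX: "sum dX (Pow S) \<le> 1" if S: "finite S" "S \<subseteq> N" for S
  proof -
    have "sum dX (Pow S) \<le> sum (mob (B X X)) (Pow S)"
      by (rule sum_mono) (use S mob_B_nonneg[OF _ _ X(1)] in \<open>auto simp: dX intro: finite_subset\<close>)
    also have "\<dots> = B X X S" by (rule mob_sum[OF S(1)])
    also have "\<dots> \<le> 1" using B_le[OF S(2) X(1)] X(3) by simp
    finally show ?thesis .
  qed
  have bY: "sum dY (Pow S) \<le> 1" if S: "finite S" "S \<subseteq> N" for S
  proof -
    have "sum dY (Pow S) \<le> sum (mob (B Y Y)) (Pow S)"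
      by (rule sum_mono) (use S mob_B_nonneg[OF _ _ Y(1)] in \<open>auto simp: dY intro: finite_subset\<close>)
    also have "\<dots> = B Y Y S" by (rule mob_sum[OF S(1)])
    also have "\<dots> \<le> 1" using B_le[OF S(2) Y(1)] Y(3) by simp
    finally show ?thesis .
  qed
  have bd: "(\<Sum>T\<in>Pow S. \<bar>dX T - dY T\<bar>) \<le> 2 * sqrt (\<integral>x. (X x - Y x)\<^sup>2 \<partial>M)" if S: "finite S" "S \<subseteq> N" for S
  proof -
    have "(\<Sum>T\<in>Pow S. \<bar>dX T - dY T\<bar>) \<le> (\<Sum>T\<in>Pow S. \<bar>mob (B X X) T - mob (B Y Y) T\<bar>)"
      by (rule sum_mono) (auto simp: dX dY)
    also have "\<dots> \<le> 2 * sqrt (\<integral>x. (X x - Y x)\<^sup>2 \<partial>M)"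
      by (rule main_finite[OF X(1,3) Y(1,3) S])
    finally show ?thesis .
  qed
  have shX: "shapley_infl M Sp Z N X = sh N dX"
    by (rule ext) (simp add: shapley_infl_def shapley_def sh_def dX_def)
  have shY: "shapley_infl M Sp Z N Y = sh N dY"
    by (rule ext) (simp add: shapley_infl_def shapley_def sh_def dY_def)
  have "infsum (\<lambda>i. \<bar>sh N dX i - sh N dY i\<bar>) N \<le> 2 * sqrt (\<integral>x. (X x - Y x)\<^sup>2 \<partial>M)"
    by (rule tv_abstract[OF nnX nnY bX bY bd])
  then show ?thesis unfolding TV_def shX shY by simp
qed

end
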